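(* Let $n\ge2$, let $u_0$ be a polar $n$-complex number, and let $\Gamma$ be a closed piecewise smooth loop along which $u-u_0$ is invertible. For $k=1,\dots,\lfloor(n-1)/2\rfloor$ let $\Gamma_k$ be the projection of $\Gamma$ onto the plane of coordinates $(v_k,\tilde v_k)$ and $u_{0,k}=(v_k(u_0),\tilde v_k(u_0))$ the projection of $u_0$; assume each $\Gamma_k$ is a simple closed curve traversed counterclockwise, not passing through $u_{0,k}$, and set $\mathrm{int}_k=1$ if $u_{0,k}$ lies inside $\Gamma_k$ and $\mathrm{int}_k=0$ if it lies outside. Then $$\oint_\Gamma\frac{du}{u-u_0}=2\pi\sum_{k=1}^{\lfloor(n-1)/2\rfloor}\tilde e_k\,\mathrm{int}_k.$$ Moreover, if $f(u)=\sum_{j=0}^\infty c_j(u-u_0)^j$ with polar $n$-complex $c_j$ converges absolutely on an open set containing $\Gamma$ and a surface spanning $\Gamma$, then $$\oint_\Gamma\frac{f(u)\,du}{u-u_0}=2\pi f(u_0)\sum_{k=1}^{\lfloor(n-1)/2\rfloor}\tilde e_k\,\mathrm{int}_k.$$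
   Context: Polar $n$-complex numbers: $u=x_0+h_1x_1+\cdots+h_{n-1}x_{n-1}$, $x_j\in\mathbb{R}$, $h_0=1$, componentwise addition, bilinear multiplication $h_jh_k=h_{(j+k)\bmod n}$. For $u$: $v_k=\sum_px_p\cos(2\pi kp/n)$, $\tilde v_k=\sum_px_p\sin(2\pi kp/n)$; $\tilde e_k=\frac2n\sum_{p=0}^{n-1}\sin(2\pi kp/n)h_p$. For $F(u)=\sum_kh_kP_k$ and $du=\sum_kh_kdx_k$, $\oint_\Gamma F(u)\,du=\sum_{k=0}^{n-1}h_k\oint_\Gamma\sum_{l=0}^{n-1}P_l\,dx_{(k-l)\bmod n}$; $1/(u-u_0)$ denotes the multiplicative inverse in the algebra. *)

theory Defs
  imports "HOL-Complex_Analysis.Complex_Analysis"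
begin

text \<open>Polar n-complex numbers are represented as functions nat => real;
  only the components 0..n-1 are meaningful (x_j is the coefficient of h_j).
  All algebra operations below return 0 in components >= n.\<close>

definition pc_mult :: "nat \<Rightarrow> (nat \<Rightarrow> real) \<Rightarrow> (nat \<Rightarrow> real) \<Rightarrow> (nat \<Rightarrow> real)" where
  "pc_mult n a b = (\<lambda>m. if m < n then
      (\<Sum>j<n. \<Sum>k<n. if (j + k) mod n = m then a j * b k else 0) else 0)"

definition pc_one :: "nat \<Rightarrow> (nat \<Rightarrow> real)" where
  "pc_one n = (\<lambda>m. if m = 0 \<and> 0 < n then 1 else 0)"

primrec pc_pow :: "nat \<Rightarrow> (nat \<Rightarrow> real) \<Rightarrow> nat \<Rightarrow> (nat \<Rightarrow> real)" where
  "pc_pow n u 0 = pc_one n"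
| "pc_pow n u (Suc j) = pc_mult n (pc_pow n u j) u"

definition pc_invertible :: "nat \<Rightarrow> (nat \<Rightarrow> real) \<Rightarrow> bool" where
  "pc_invertible n u = (\<exists>w. pc_mult n u w = pc_one n)"

text \<open>The multiplicative inverse (meaningful when u is invertible).\<close>
definition pc_inverse :: "nat \<Rightarrow> (nat \<Rightarrow> real) \<Rightarrow> (nat \<Rightarrow> real)" where
  "pc_inverse n u = (SOME w. pc_mult n u w = pc_one n \<and> (\<forall>i\<ge>n. w i = 0))"

definition pc_v :: "nat \<Rightarrow> nat \<Rightarrow> (nat \<Rightarrow> real) \<Rightarrow> real" where
  "pc_v n k u = (\<Sum>p<n. u p * cos (2 * pi * real k * real p / real n))"

definition pc_vt :: "nat \<Rightarrow> nat \<Rightarrow> (nat \<Rightarrow> real) \<Rightarrow> real" where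
  "pc_vt n k u = (\<Sum>p<n. u p * sin (2 * pi * real k * real p / real n))"

definition pc_et :: "nat \<Rightarrow> nat \<Rightarrow> (nat \<Rightarrow> real)" where
  "pc_et n k = (\<lambda>p. if p < n then 2 / real n * sin (2 * pi * real k * real p / real n) else 0)"

text \<open>A loop Gamma in n-complex space is given by its coordinate functions
  gam j :: real => real (j < n), parametrised over [0,1]; its point at time t
  is (\<lambda>j. gam j t).\<close>
definition pc_proj_path :: "nat \<Rightarrow> nat \<Rightarrow> (nat \<Rightarrow> real \<Rightarrow> real) \<Rightarrow> real \<Rightarrow> complex" where
  "pc_proj_path n k gam = (\<lambda>t. Complex (pc_v n k (\<lambda>j. gam j t)) (pc_vt n k (\<lambda>j. gam j t)))"

definition pc_proj_point :: "nat \<Rightarrow> nat \<Rightarrow> (nat \<Rightarrow> real) \<Rightarrow> complex" where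
  "pc_proj_point n k u = Complex (pc_v n k u) (pc_vt n k u)"

definition pc_line_integral :: "nat \<Rightarrow> ((nat \<Rightarrow> real) \<Rightarrow> (nat \<Rightarrow> real)) \<Rightarrow> (nat \<Rightarrow> real \<Rightarrow> real) \<Rightarrow> (nat \<Rightarrow> real)" where
  "pc_line_integral n F gam = (\<lambda>k. if k < n then
      integral {0..1} (\<lambda>t. \<Sum>l<n. F (\<lambda>j. gam j t) l *
                          vector_derivative (gam ((k + n - l) mod n)) (at t))
    else 0)"

definition pc_open :: "nat \<Rightarrow> (nat \<Rightarrow> real) set \<Rightarrow> bool" where
  "pc_open n S = (\<forall>u\<in>S. \<exists>e>0. \<forall>w. (\<forall>m<n. \<bar>w m - u m\<bar> < e) \<longrightarrow> w \<in> S)"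

end

theory Submission
  imports Defs
begin

definition om :: "nat \<Rightarrow> complex" where "om n = cis (2*pi/real n)"
definition phi :: "nat \<Rightarrow> nat \<Rightarrow> (nat \<Rightarrow> real) \<Rightarrow> complex" where
  "phi n k x = (\<Sum>p<n. complex_of_real (x p) * om n ^ (k*p))"

lemma om_pow: "om n ^ m = cis (2*pi*real m/real n)"
  unfolding om_def by (subst Complex.DeMoivre) (simp add: mult_ac)

lemma om_pow_n: "n > 0 \<Longrightarrow> om n ^ n = 1"
  by (simp add: om_pow)

lemma om_pow_mod: assumes "n > 0" shows "om n ^ a = om n ^ (a mod n)"
proof -
  have "om n ^ a = om n ^ (n*(a div n) + a mod n)" by (simp only: mult_div_mod_eq)
  also have "\<dots> = om n ^ (n*(a div n)) * om n ^ (a mod n)" by (rule power_add)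
  also have "om n ^ (n*(a div n)) = 1" by (simp add: power_mult om_pow_n[OF assms])
  finally show ?thesis by simp
qed

lemma om_pow_eq_1: assumes n: "n > 0" shows "om n ^ a = 1 \<longleftrightarrow> n dvd a"
proof
  assume "n dvd a" then show "om n ^ a = 1"
    using om_pow_mod[OF n, of a] by simp
next
  assume h: "om n ^ a = 1"
  show "n dvd a"
  proof (rule ccontr)
    assume nd: "\<not> n dvd a"
    define r where "r = a mod n"
    have r0: "r > 0" using nd by (simp add: r_def dvd_eq_mod_eq_0)
    have rn: "r < n" using n by (simp add: r_def)
    have "cis (2*pi*real r/real n) = 1" using h om_pow_mod[OF n, of a] by (simp add: om_pow r_def)
    then have "cos (2*pi*real r/real n) = 1" by (metis cis.sel(1) one_complex.sel(1))
    then obtain N :: int where N: "2*pi*real r/real n = N*2*pi" by (auto simp: cos_one_2pi_int)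
    then have "real r = N * real n" using n by (simp add: field_simps)
    then have "int r = N * int n" by (metis of_int_eq_iff of_int_mult of_int_of_nat_eq)
    moreover have "N * int n \<le> 0 \<or> N * int n \<ge> int n"
    proof (cases "N \<le> 0")
      case True then show ?thesis by (simp add: mult_nonpos_nonneg)
    next
      case False then have "1 \<le> N" by simp
      then have "1 * int n \<le> N * int n" by (intro mult_right_mono) auto
      then show ?thesis by simp
    qed
    ultimately show False using r0 rn by linarith
  qed
qed

lemma orth: assumes n: "n > 0"
  shows "(\<Sum>p<n. om n ^ (a*p)) = (if n dvd a then of_nat n else 0)"
proof (cases "n dvd a")
  case True
  then have "\<And>p. om n ^ (a*p) = 1" using om_pow_eq_1[OF n] by simp
  then show ?thesis using True by simp
next
  case False
  have ne: "om n ^ a \<noteq> 1" using False om_pow_eq_1[OF n] by simp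
  have "(om n ^ a) ^ n = 1" using om_pow_n[OF n] by (metis power_mult mult.commute power_one)
  then have "(\<Sum>p<n. (om n ^ a) ^ p) = 0" using ne by (simp add: sum_gp_strict)
  then show ?thesis using False by (simp add: power_mult)
qed

lemma dvd_2n: "(0::nat) < d \<Longrightarrow> d < 2*n \<Longrightarrow> n dvd d \<longleftrightarrow> d = n"
proof
  assume "0 < d" "d < 2*n" "n dvd d"
  then obtain q where "d = n*q" by blast
  with \<open>0<d\<close> \<open>d<2*n\<close> have "q = 1"
    by (metis One_nat_def less_2_cases_iff mult_0_right mult_less_cancel1 nat_neq_iff mult.commute)
  then show "d = n" using \<open>d = n*q\<close> by simp
qed simp

lemma cnj_om: assumes n: "n > 0" shows "cnj (om n ^ m) = om n ^ ((n - m mod n) mod n)"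
proof -
  have a: "cnj (om n ^ m) * om n ^ m = 1"
    unfolding om_pow by (subst cis_cnj, subst cis_mult) simp
  have "om n ^ ((n - m mod n) mod n) * om n ^ m = om n ^ ((n - m mod n) mod n + m)" by (simp add: power_add)
  also have "\<dots> = 1" using om_pow_eq_1[OF n]
    by (metis (no_types, lifting) add.commute mod_add_left_eq mod_less_divisor mod_mod_trivial n
        le_add_diff_inverse2 less_imp_le_nat mod_self dvd_eq_mod_eq_0)
  finally have b: "om n ^ ((n - m mod n) mod n) * om n ^ m = 1" .
  have "om n ^ m \<noteq> 0" by (simp add: om_def)
  then show ?thesis using a b by (metis mult_cancel_right)
qed

lemma mod_sol: assumes "j < n" "l < n" "m < (n::nat)"
  shows "((j + l) mod n = m) \<longleftrightarrow> (l = (m + n - j) mod n)"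
proof -
  have A: "(m+n-j) mod n = m - j" if "m \<ge> j"
  proof -
    have e: "m+n-j = (m-j) + n" using that by arith
    show ?thesis by (simp only: e mod_add_self2) (rule mod_less, use assms in arith)
  qed
  have B: "(m+n-j) mod n = m+n-j" if "m < j" by (rule mod_less) (use that assms in arith)
  have C: "(j+l) mod n = j+l-n" if "j+l \<ge> n"
  proof -
    define d where "d = j+l-n"
    have e: "j+l = d + n" using that unfolding d_def by arith
    have dn: "d < n" using assms unfolding d_def by arith
    have "(j+l) mod n = d" by (simp only: e mod_add_self2) (rule mod_less[OF dn])
    then show ?thesis by (simp only: d_def)
  qed
  have D: "(j+l) mod n = j+l" if "j+l < n" by (rule mod_less) (use that in arith)
  show ?thesis
  proof (cases "j+l<n")
    case True
    show ?thesis
    proof (cases "m \<ge> j")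
      case c: True show ?thesis by (simp only: D[OF True] A[OF c]) (use True c in arith)
    next
      case c: False then have "m < j" by simp
      show ?thesis by (simp only: D[OF True] B[OF \<open>m < j\<close>]) (use True c in arith)
    qed
  next
    case False
    then have F: "j+l \<ge> n" by simp
    show ?thesis
    proof (cases "m \<ge> j")
      case c: True show ?thesis by (simp only: C[OF F] A[OF c]) (use F c assms in arith)
    next
      case c: False then have "m < j" by simp
      show ?thesis by (simp only: C[OF F] B[OF \<open>m < j\<close>]) (use F c assms in arith)
    qed
  qed
qed

lemma pc_mult_alt: "m < n \<Longrightarrow> pc_mult n a b m = (\<Sum>j<n. a j * b ((m + n - j) mod n))"
proof -
  assume m: "m < n"
  have "\<And>j. j < n \<Longrightarrow> (\<Sum>l<n. if (j + l) mod n = m then a j * b l else 0) = a j * b ((m + n - j) mod n)"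
  proof -
    fix j assume j: "j < n"
    have "(\<Sum>l<n. if (j + l) mod n = m then a j * b l else 0) = (\<Sum>l<n. if l = (m + n - j) mod n then a j * b l else 0)"
      using mod_sol[OF j _ m] by (intro sum.cong) auto
    also have "\<dots> = a j * b ((m + n - j) mod n)" using j by (simp add: sum.delta)
    finally show "?thesis j" .
  qed
  then show ?thesis using m unfolding pc_mult_def by simp
qed

lemma phi_hom: assumes n: "n > 0" shows "phi n k (pc_mult n a b) = phi n k a * phi n k b"
proof -
  have "phi n k (pc_mult n a b) = (\<Sum>m<n. \<Sum>j<n. \<Sum>l<n. (if (j + l) mod n = m then complex_of_real (a j * b l) * om n ^ (k*m) else 0))"
    unfolding phi_def pc_mult_def
    apply (intro sum.cong refl)
    apply (simp add: of_real_sum sum_distrib_right)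
    apply (intro sum.cong refl)
    apply simp
    done
  also have "\<dots> = (\<Sum>j<n. \<Sum>l<n. \<Sum>m<n. (if m = (j + l) mod n then complex_of_real (a j * b l) * om n ^ (k*m) else 0))"
    by (subst sum.swap, subst (2) sum.swap) (simp add: eq_commute)
  also have "\<dots> = (\<Sum>j<n. \<Sum>l<n. complex_of_real (a j * b l) * om n ^ (k*((j + l) mod n)))"
    using n by (simp add: sum.delta)
  also have "\<dots> = (\<Sum>j<n. \<Sum>l<n. (complex_of_real (a j) * om n ^ (k*j)) * (complex_of_real (b l) * om n ^ (k*l)))"
  proof (intro sum.cong refl)
    fix j l
    have "om n ^ (k*((j + l) mod n)) = om n ^ ((k*((j + l) mod n)) mod n)" by (rule om_pow_mod[OF n])
    also have "\<dots> = om n ^ ((k*(j + l)) mod n)" by (simp add: mod_mult_right_eq)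
    also have "\<dots> = om n ^ (k*(j + l))" by (rule om_pow_mod[OF n, symmetric])
    finally show "complex_of_real (a j * b l) * om n ^ (k*((j + l) mod n)) = (complex_of_real (a j) * om n ^ (k*j)) * (complex_of_real (b l) * om n ^ (k*l))"
      by (simp add: distrib_left power_add)
  qed
  also have "\<dots> = phi n k a * phi n k b"
    unfolding phi_def by (simp add: sum_product)
  finally show ?thesis .
qed

lemma phi_one: assumes n: "n > 0" shows "phi n k (pc_one n) = 1"
proof -
  have "phi n k (pc_one n) = (\<Sum>p<n. if p = 0 then 1 else 0)"
    unfolding phi_def pc_one_def by (intro sum.cong) (auto simp: n)
  then show ?thesis using n by simp
qed

lemma phi_pow: "n > 0 \<Longrightarrow> phi n k (pc_pow n x i) = phi n k x ^ i"
  by (induction i) (simp_all add: phi_one phi_hom)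

lemma phi_diff: "phi n k (\<lambda>p. x p - y p) = phi n k x - phi n k y"
  unfolding phi_def by (simp add: sum_subtractf left_diff_distrib)

lemma phi_scale: "phi n k (\<lambda>p. c * x p) = of_real c * phi n k x"
  unfolding phi_def by (simp add: sum_distrib_left mult.assoc)

lemma phi_sum: "phi n k (\<lambda>p. \<Sum>i\<in>A. g i p) = (\<Sum>i\<in>A. phi n k (g i))"
  unfolding phi_def by (simp add: of_real_sum sum_distrib_right) (rule sum.swap)

lemma phi_cong: "(\<And>p. p < n \<Longrightarrow> x p = y p) \<Longrightarrow> phi n k x = phi n k y"
  unfolding phi_def by simp

lemma inversion: assumes n: "n > 0" and m: "m < n"
  shows "(\<Sum>k<n. phi n k x * om n ^ (k*(n-m))) = of_nat n * of_real (x m)"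
proof -
  have "(\<Sum>k<n. phi n k x * om n^(k*(n-m))) = (\<Sum>k<n. \<Sum>p<n. of_real (x p) * (om n^(k*p) * om n^(k*(n-m))))"
    unfolding phi_def by (simp add: sum_distrib_right mult.assoc)
  also have "\<dots> = (\<Sum>p<n. \<Sum>k<n. of_real (x p) * (om n^(k*p) * om n^(k*(n-m))))" by (rule sum.swap)
  also have "\<dots> = (\<Sum>p<n. of_real (x p) * (\<Sum>k<n. om n ^ ((p + (n - m))*k)))"
  proof (intro sum.cong refl)
    fix p
    have "\<And>k. om n^(k*p) * om n^(k*(n-m)) = om n ^ ((p + (n - m))*k)"
    proof -
      fix k
      have "k*p + k*(n-m) = (p+(n-m))*k" by (simp only: add_mult_distrib2 mult.commute)
      then show "om n^(k*p) * om n^(k*(n-m)) = om n ^ ((p + (n - m))*k)" by (metis power_add)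
    qed
    then show "(\<Sum>k<n. of_real (x p) * (om n^(k*p) * om n^(k*(n-m)))) = of_real (x p) * (\<Sum>k<n. om n ^ ((p + (n - m))*k))"
      by (simp add: sum_distrib_left)
  qed
  also have "\<dots> = (\<Sum>p<n. of_real (x p) * (if p = m then of_nat n else 0))"
  proof (intro sum.cong refl)
    fix p assume p: "p \<in> {..<n}"
    have "n dvd (p + (n - m)) \<longleftrightarrow> p + (n - m) = n" using p m by (intro dvd_2n) auto
    also have "\<dots> \<longleftrightarrow> p = m" using m by auto
    finally show "of_real (x p) * (\<Sum>k<n. om n ^ ((p + (n - m))*k)) = of_real (x p) * (if p = m then of_nat n else (0::complex))"
      using orth[OF n, of "p + (n-m)"] by simp
  qed
  also have "\<dots> = of_nat n * of_real (x m)" using m by (simp add: if_distrib sum.delta cong: if_cong)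
  finally show ?thesis .
qed

lemma eq_by_phi: assumes n: "n > 0" and x: "\<forall>m\<ge>n. x m = 0" and y: "\<forall>m\<ge>n. y m = 0"
  and h: "\<forall>k<n. phi n k x = phi n k y" shows "x = y"
proof
  fix m show "x m = y m"
  proof (cases "m < n")
    case True
    have "(\<Sum>k<n. phi n k x * om n^(k*(n-m))) = (\<Sum>k<n. phi n k y * om n^(k*(n-m)))" using h by simp
    then have "of_nat n * complex_of_real (x m) = of_nat n * of_real (y m)" by (simp only: inversion[OF n True])
    then show ?thesis using n by simp
  next
    case False then show ?thesis using x y by simp
  qed
qed

lemma cnj_inv: assumes "om n ^ a * om n ^ b = 1" shows "om n ^ a = cnj (om n ^ b)"
proof -
  have a: "cnj (om n ^ b) * om n ^ b = 1"
    unfolding om_pow by (subst cis_cnj, subst cis_mult) simp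
  have "om n ^ b \<noteq> 0" by (simp add: om_def)
  then show ?thesis using a assms by (metis mult_cancel_right)
qed

lemma phi_cnj: assumes n: "n > 0" and k: "k \<le> n"
  shows "phi n (n - k) x = cnj (phi n k x)"
proof -
  have "\<And>p. om n ^ ((n-k)*p) = cnj (om n ^ (k*p))"
  proof (rule cnj_inv)
    fix p
    have "om n ^ ((n-k)*p) * om n ^ (k*p) = om n ^ ((n-k)*p + k*p)" by (simp add: power_add)
    also have "(n-k)*p + k*p = n*p" using k by (simp add: add_mult_distrib[symmetric])
    finally show "om n ^ ((n-k)*p) * om n ^ (k*p) = 1" by (simp add: power_mult om_pow_n[OF n])
  qed
  then show ?thesis unfolding phi_def by simp
qed

lemma om_pow_cis: "om n ^ (k*p) = Complex (cos (2 * pi * real k * real p / real n)) (sin (2 * pi * real k * real p / real n))"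
  by (simp add: om_pow cis.ctr mult.assoc)

lemma phi_proj_point: "pc_proj_point n k u = phi n k u"
  unfolding pc_proj_point_def pc_v_def pc_vt_def phi_def om_pow_cis
  by (simp add: complex_eq_iff Re_sum Im_sum)

lemma phi_proj_path: "pc_proj_path n k gam t = phi n k (\<lambda>j. gam j t)"
  unfolding pc_proj_path_def using phi_proj_point[unfolded pc_proj_point_def] by simp

lemma common_C1:
  fixes gam :: "nat \<Rightarrow> real \<Rightarrow> real"
  assumes "\<forall>j<n. valid_path (gam j)"
  obtains T where "finite T" "\<forall>j<n. gam j C1_differentiable_on ({0..1} - T)"
proof -
  have "\<forall>j. \<exists>T. j < n \<longrightarrow> finite T \<and> gam j C1_differentiable_on ({0..1} - T)"
    using assms unfolding valid_path_def piecewise_C1_differentiable_on_def by blast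
  from choice[OF this] obtain Tf where Tf: "\<forall>j. j < n \<longrightarrow> finite (Tf j) \<and> gam j C1_differentiable_on ({0..1} - Tf j)"
    by blast
  have "finite (\<Union>j<n. Tf j)" using Tf by (intro finite_UN_I finite_lessThan) auto
  moreover have "\<forall>j<n. gam j C1_differentiable_on ({0..1} - (\<Union>j<n. Tf j))"
    using Tf by (auto elim!: C1_differentiable_on_subset)
  ultimately show ?thesis using that by blast
qed

lemma pk_deriv:
  fixes gam :: "nat \<Rightarrow> real \<Rightarrow> real"
  assumes T: "\<forall>j<n. gam j C1_differentiable_on ({0..1} - T)" and t: "t \<in> {0..1} - T"
  shows "((\<lambda>t. phi n k (\<lambda>j. gam j t)) has_vector_derivative phi n k (\<lambda>j. vector_derivative (gam j) (at t))) (at t)"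
  unfolding phi_def
proof (rule has_vector_derivative_sum)
  fix p assume p: "p \<in> {..<n}"
  have "gam p differentiable at t" using T p t by (auto simp: C1_differentiable_on_eq)
  then have "(gam p has_vector_derivative vector_derivative (gam p) (at t)) (at t)"
    by (rule vector_derivative_works[THEN iffD1])
  then have "(gam p has_field_derivative vector_derivative (gam p) (at t)) (at t)"
    by (simp add: has_real_derivative_iff_has_vector_derivative)
  then show "((\<lambda>t. complex_of_real (gam p t) * om n ^ (k * p)) has_vector_derivative
          complex_of_real (vector_derivative (gam p) (at t)) * om n ^ (k * p)) (at t)"
    by (intro has_vector_derivative_mult_left has_vector_derivative_of_real)
qed

lemma pk_valid:
  fixes gam :: "nat \<Rightarrow> real \<Rightarrow> real"
  assumes vp: "\<forall>j<n. valid_path (gam j)"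
  shows "valid_path (\<lambda>t. phi n k (\<lambda>j. gam j t))"
proof -
  obtain T where T: "finite T" "\<forall>j<n. gam j C1_differentiable_on ({0..1} - T)"
    using common_C1[OF vp] by blast
  have cg: "continuous_on {0..1} (gam j)" if "j < n" for j
    using vp that valid_path_imp_path path_def by blast
  have c1: "continuous_on {0..1} (\<lambda>t. phi n k (\<lambda>j. gam j t))"
    unfolding phi_def by (intro continuous_intros continuous_on_of_real_o_iff[THEN iffD2, unfolded o_def] cg) auto
  have cd: "continuous_on ({0..1} - T) (\<lambda>x. vector_derivative (gam j) (at x))" if "j < n" for j
    using T that by (auto simp: C1_differentiable_on_eq)
  have c2: "continuous_on ({0..1} - T) (\<lambda>t. phi n k (\<lambda>j. vector_derivative (gam j) (at t)))"
    unfolding phi_def by (intro continuous_intros continuous_on_of_real_o_iff[THEN iffD2, unfolded o_def] cd) auto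
  have "(\<lambda>t. phi n k (\<lambda>j. gam j t)) C1_differentiable_on ({0..1} - T)"
    unfolding C1_differentiable_on_def
    by (rule exI[where x="\<lambda>t. phi n k (\<lambda>j. vector_derivative (gam j) (at t))"]) (use pk_deriv[OF T(2)] c2 in blast)
  then show ?thesis unfolding valid_path_def piecewise_C1_differentiable_on_def using c1 T(1) by blast
qed

lemma line_integral_phi:
  fixes gam :: "nat \<Rightarrow> real \<Rightarrow> real"
  assumes n: "n > 0" and vp: "\<forall>j<n. valid_path (gam j)"
    and ci: "\<forall>k<n. (G k has_contour_integral J k) (\<lambda>t. phi n k (\<lambda>j. gam j t))"
    and FG: "\<forall>k<n. \<forall>t\<in>{0..1}. phi n k (F (\<lambda>j. gam j t)) = G k (phi n k (\<lambda>j. gam j t))"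
  shows "\<forall>k<n. phi n k (pc_line_integral n F gam) = J k"
proof -
  obtain T where T: "finite T" "\<forall>j<n. gam j C1_differentiable_on ({0..1} - T)"
    using common_C1[OF vp] by blast
  define D where "D t = (\<lambda>j. vector_derivative (gam j) (at t))" for t
  define h where "h t = pc_mult n (F (\<lambda>j. gam j t)) (D t)" for t
  have H: "((\<lambda>t. phi n k (h t)) has_integral J k) {0..1}" if k: "k < n" for k
  proof -
    have c: "((\<lambda>t. G k (phi n k (\<lambda>j. gam j t)) * vector_derivative (\<lambda>t. phi n k (\<lambda>j. gam j t)) (at t within {0..1})) has_integral J k) {0..1}"
      using ci k unfolding has_contour_integral_def by blast
    show ?thesis
    proof (rule has_integral_spike_finite[OF _ _ c])
      show "finite (T \<union> {0,1})" using T by simp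
      fix t assume t: "t \<in> {0..1} - (T \<union> {0,1})"
      then have t01: "0 < t" "t < 1" by auto
      have "vector_derivative (\<lambda>t. phi n k (\<lambda>j. gam j t)) (at t within {0..1}) = vector_derivative (\<lambda>t. phi n k (\<lambda>j. gam j t)) (at t)"
        using at_within_Icc_at[OF t01] by simp
      also have "\<dots> = phi n k (D t)" unfolding D_def
        by (rule vector_derivative_at[OF pk_deriv[OF T(2)]]) (use t in auto)
      finally show "phi n k (h t) = G k (phi n k (\<lambda>j. gam j t)) * vector_derivative (\<lambda>t. phi n k (\<lambda>j. gam j t)) (at t within {0..1})"
        unfolding h_def using phi_hom[OF n] FG k t by auto
    qed
  qed
  define Y where "Y m = (1/of_nat n) * (\<Sum>k<n. J k * om n ^ (k*(n-m)))" for m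
  have hm: "((\<lambda>t. h t m) has_integral Re (Y m)) {0..1}" if m: "m < n" for m
  proof -
    have "((\<lambda>t. (1/of_nat n) * (\<Sum>k<n. phi n k (h t) * om n ^ (k*(n-m)))) has_integral Y m) {0..1}"
      unfolding Y_def by (intro has_integral_mult_right has_integral_sum has_integral_mult_left H) auto
    moreover have "(1/of_nat n) * (\<Sum>k<n. phi n k (h t) * om n ^ (k*(n-m))) = complex_of_real (h t m)" for t
      using inversion[OF n m, of "h t"] n by simp
    ultimately have "((\<lambda>t. complex_of_real (h t m)) has_integral Y m) {0..1}" by simp
    from has_integral_linear[OF this bounded_linear_Re] show ?thesis by (simp add: o_def)
  qed
  have Ieq: "pc_line_integral n F gam m = Re (Y m)" if m: "m < n" for m
  proof -
    have "pc_line_integral n F gam m = integral {0..1} (\<lambda>t. h t m)"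
      unfolding pc_line_integral_def h_def D_def using m by (simp add: pc_mult_alt)
    then show ?thesis using hm[OF m] by (simp add: integral_unique)
  qed
  show ?thesis
  proof (intro allI impI)
    fix k assume k: "k < n"
    have "((\<lambda>t. \<Sum>m<n. complex_of_real (h t m) * om n^(k*m)) has_integral (\<Sum>m<n. complex_of_real (pc_line_integral n F gam m) * om n^(k*m))) {0..1}"
      by (intro has_integral_sum has_integral_mult_left has_integral_of_real) (auto simp: Ieq hm)
    then have "((\<lambda>t. phi n k (h t)) has_integral phi n k (pc_line_integral n F gam)) {0..1}"
      unfolding phi_def .
    then show "phi n k (pc_line_integral n F gam) = J k" using H[OF k] by (rule has_integral_unique)
  qed
qed

lemma inv_prop: assumes n: "n > 0" and u: "pc_invertible n u"
  shows "pc_mult n u (pc_inverse n u) = pc_one n"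
proof -
  obtain w where w: "pc_mult n u w = pc_one n" using u unfolding pc_invertible_def by blast
  define w' where "w' = (\<lambda>i. if i < n then w i else 0)"
  have "pc_mult n u w' = pc_mult n u w" unfolding pc_mult_def w'_def
    by (intro ext if_cong refl sum.cong) auto
  then have "\<exists>w. pc_mult n u w = pc_one n \<and> (\<forall>i\<ge>n. w i = 0)" using w by (auto simp: w'_def)
  from someI_ex[OF this] show ?thesis unfolding pc_inverse_def by blast
qed

lemma phi_inv: assumes n: "n > 0" and u: "pc_invertible n u"
  shows "phi n k u * phi n k (pc_inverse n u) = 1"
  using inv_prop[OF n u] phi_hom[OF n] phi_one[OF n] by metis

lemma om_cnj: assumes n: "n > 0" and k: "k \<le> n"
  shows "om n ^ ((n-k)*p) = cnj (om n ^ (k*p))"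
proof (rule cnj_inv)
  have "om n ^ ((n-k)*p) * om n ^ (k*p) = om n ^ ((n-k)*p + k*p)" by (simp add: power_add)
  also have "(n-k)*p + k*p = n*p" using k by (simp add: add_mult_distrib[symmetric])
  finally show "om n ^ ((n-k)*p) * om n ^ (k*p) = 1" by (simp add: power_mult om_pow_n[OF n])
qed

lemma phi_et: assumes n: "n > 0" and k1: "1 \<le> k'" "2*k' < n" and k: "k < n"
  shows "phi n k (pc_et n k') = \<i> * (if k = k' then 1 else 0) - \<i> * (if k = n - k' then 1 else 0)"
proof -
  have s: "complex_of_real (pc_et n k' p) = (1/(of_nat n * \<i>)) * (om n^(k'*p) - om n^((n-k')*p))" if p: "p < n" for p
  proof -
    define \<theta> where "\<theta> = 2*pi*real (k'*p)/real n"
    have o1: "om n^(k'*p) = cis \<theta>" unfolding \<theta>_def by (rule om_pow)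
    have o2: "om n^((n-k')*p) = cnj (cis \<theta>)" using om_cnj[OF n, of k' p] k1 o1 by simp
    have d: "cis \<theta> - cnj (cis \<theta>) = 2 * \<i> * of_real (sin \<theta>)" by (simp add: complex_eq_iff)
    have e: "pc_et n k' p = 2 / real n * sin \<theta>" using p unfolding pc_et_def \<theta>_def by (simp add: mult.assoc)
    show ?thesis unfolding o1 o2 d e using n by (simp add: field_simps)
  qed
  have "phi n k (pc_et n k') = (\<Sum>p<n. (1/(of_nat n * \<i>)) * (om n^(k'*p) - om n^((n-k')*p)) * om n ^ (k*p))"
    unfolding phi_def by (intro sum.cong refl) (simp add: s)
  also have "\<dots> = (1/(of_nat n * \<i>)) * ((\<Sum>p<n. om n^((k'+k)*p)) - (\<Sum>p<n. om n^((n-k'+k)*p)))"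
    by (simp add: sum_distrib_left sum_subtractf algebra_simps power_add)
  also have "\<dots> = (1/(of_nat n * \<i>)) * ((if n dvd (k'+k) then of_nat n else 0) - (if n dvd (n-k'+k) then of_nat n else 0))"
    by (simp add: orth[OF n])
  also have "(n dvd (k'+k)) = (k = n - k')"
  proof -
    have "(n dvd (k'+k)) = (k'+k = n)" using k1 k by (intro dvd_2n) auto
    then show ?thesis using k1 k by auto
  qed
  also have "(n dvd (n-k'+k)) = (k = k')"
  proof -
    have "(n dvd (n-k'+k)) = (n-k'+k = n)" using k1 k by (intro dvd_2n) auto
    then show ?thesis using k1 k by auto
  qed
  finally have eq: "phi n k (pc_et n k') = (1/(of_nat n * \<i>)) * ((if k = n - k' then of_nat n else 0) - (if k = k' then of_nat n else 0))" .
  have "(1/(of_nat n * \<i>)) * ((if k = n - k' then of_nat n else 0) - (if k = k' then of_nat n else 0))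
      = \<i> * (if k = k' then 1 else 0) - \<i> * (if k = n - k' then 1 else (0::complex))"
    using n by (cases "k = k'"; cases "k = n - k'") (simp_all add: field_simps)
  then show ?thesis using eq by simp
qed

lemma im_phi_real: assumes n: "n > 0" and k: "k = 0 \<or> 2*k = n"
  shows "Im (phi n k x) = 0"
proof -
  have "Im (om n ^ (k*p)) = 0" for p
  proof (cases "k = 0")
    case True then show ?thesis by simp
  next
    case False
    then have nk: "real n = 2 * real k" "k > 0" using k by auto
    have "2*pi*real (k*p)/real n = real p * pi" using nk by (simp add: field_simps)
    then show ?thesis by (simp add: om_pow)
  qed
  then show ?thesis unfolding phi_def by (simp add: Im_sum)
qed

lemma wind_real_zero:
  assumes p: "path p" and cl: "pathfinish p = pathstart p" and im: "\<forall>t\<in>{0..1}. Im (p t) = 0"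
    and z: "Im z = 0" and nz: "z \<notin> path_image p"
  shows "winding_number p z = 0"
proof -
  have cont: "continuous_on {a..b} (\<lambda>t. Re (p t))" if "0 \<le> a" "b \<le> 1" for a b
  proof -
    have "continuous_on {0..1} p" using p by (simp add: path_def)
    then have "continuous_on {a..b} p" by (rule continuous_on_subset) (use that in auto)
    then show ?thesis by (intro continuous_intros)
  qed
  have neq: "Re (p t) \<noteq> Re z" if "t \<in> {0..1}" for t
  proof
    assume "Re (p t) = Re z"
    then have "p t = z" using im z that by (simp add: complex_eq_iff)
    then show False using nz that by (auto simp: path_image_def)
  qed
  show ?thesis
  proof (cases "Re (p 0) > Re z")
    case True
    have "\<forall>t\<in>{0..1}. Re (p t) > Re z"
    proof (rule ccontr)
      assume "\<not> ?thesis"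
      then obtain t where t: "t \<in> {0..1}" "Re (p t) \<le> Re z" by auto
      obtain x where x: "0 \<le> x" "x \<le> t" "Re (p x) = Re z"
        using IVT2'[of "\<lambda>t. Re (p t)" t "Re z" 0] t True cont[of 0 t] by auto
      then show False using neq[of x] t by auto
    qed
    then have "path_image p \<subseteq> {w. Re w > Re z}" by (auto simp: path_image_def)
    then show ?thesis by (intro winding_number_zero_outside[OF p convex_halfspace_Re_gt cl]) auto
  next
    case False
    then have F: "Re (p 0) < Re z" using neq[of 0] by auto
    have "\<forall>t\<in>{0..1}. Re (p t) < Re z"
    proof (rule ccontr)
      assume "\<not> ?thesis"
      then obtain t where t: "t \<in> {0..1}" "Re (p t) \<ge> Re z" by auto
      obtain x where x: "0 \<le> x" "x \<le> t" "Re (p x) = Re z"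
        using IVT'[of "\<lambda>t. Re (p t)" 0 "Re z" t] t F cont[of 0 t] by auto
      then show False using neq[of x] t by auto
    qed
    then have "path_image p \<subseteq> {w. Re w < Re z}" by (auto simp: path_image_def)
    then show ?thesis by (intro winding_number_zero_outside[OF p convex_halfspace_Re_lt cl]) auto
  qed
qed

lemma Kmem: "(k::nat) \<in> {1..(n - 1) div 2} \<longleftrightarrow> 1 \<le> k \<and> 2*k < n"
  by auto

lemma phi_scale': "phi n k (\<lambda>p. x p * c) = of_real c * phi n k x"
  using phi_scale[of n k c x] by (simp add: mult.commute)

lemma norm_om: "norm (om n ^ m) = 1"
  by (simp add: om_pow)

lemma norm_phi_le: "norm (phi n k x) \<le> (\<Sum>m<n. \<bar>x m\<bar>)"
proof -
  have "norm (phi n k x) \<le> (\<Sum>m<n. norm (complex_of_real (x m) * om n ^ (k*m)))"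
    unfolding phi_def by (rule norm_sum)
  also have "\<dots> = (\<Sum>m<n. \<bar>x m\<bar>)" by (simp add: norm_mult norm_om)
  finally show ?thesis .
qed

lemma phi_suminf: assumes "\<forall>m<n. summable (\<lambda>i. X i m)"
  shows "phi n k (\<lambda>m. \<Sum>i. X i m) = (\<Sum>i. phi n k (X i))"
proof -
  have "(\<lambda>i. phi n k (X i)) sums phi n k (\<lambda>m. \<Sum>i. X i m)"
    unfolding phi_def
  proof (rule sums_sum)
    fix m assume m: "m \<in> {..<n}"
    have "(\<lambda>i. X i m) sums (\<Sum>i. X i m)" using assms m by (simp add: summable_sums)
    from sums_mult2[OF sums_of_real[OF this], of "om n ^ (k*m)"]
    show "(\<lambda>i. complex_of_real (X i m) * om n ^ (k * m)) sums (complex_of_real (\<Sum>i. X i m) * om n ^ (k * m))"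
      by simp
  qed
  then show ?thesis by (rule sums_unique)
qed

lemma pc_mult_zero: "pc_mult n a (\<lambda>m. 0) = (\<lambda>m. 0)"
  unfolding pc_mult_def by (intro ext) (auto intro!: sum.neutral)

lemma inv_div: assumes "(x::complex) * y = 1" shows "y = 1 / x"
proof -
  have "x \<noteq> 0" using assms by auto
  then show ?thesis using assms by (simp add: field_simps)
qed

lemma part2:
  fixes n :: nat and u0 :: "nat \<Rightarrow> real" and gam :: "nat \<Rightarrow> real \<Rightarrow> real"
    and c :: "nat \<Rightarrow> nat \<Rightarrow> real" and S :: "(nat \<Rightarrow> real) set"
  assumes n0: "n > 0" and vp: "\<forall>j<n. valid_path (gam j)" and closed: "\<forall>j<n. gam j 0 = gam j 1"
    and invertible: "\<forall>t\<in>{0..1}. pc_invertible n (\<lambda>j. gam j t - u0 j)"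
    and So: "pc_open n S" and gS: "\<forall>t\<in>{0..1}. (\<lambda>j. gam j t) \<in> S"
    and sm: "\<forall>u\<in>S. summable (\<lambda>i. \<Sum>m<n. \<bar>pc_mult n (c i) (pc_pow n (\<lambda>j. u j - u0 j) i) m\<bar>)"
    and f_def: "f = (\<lambda>u m. \<Sum>i. pc_mult n (c i) (pc_pow n (\<lambda>j. u j - u0 j) i) m)"
  shows "\<forall>k<n. phi n k (pc_line_integral n (\<lambda>u. pc_mult n (f u) (pc_inverse n (\<lambda>j. u j - u0 j))) gam)
           = phi n k (f u0) * (2*pi*\<i> * winding_number (\<lambda>t. phi n k (\<lambda>j. gam j t)) (phi n k u0))"
proof -
  define T where "T i u = pc_mult n (c i) (pc_pow n (\<lambda>j. u j - u0 j) i)" for i u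
  define g where "g k w = (\<Sum>i. phi n k (c i) * w^i)" for k w
  have phiT: "phi n k (T i u) = phi n k (c i) * (phi n k u - phi n k u0)^i" for k i u
    unfolding T_def by (simp add: phi_hom[OF n0] phi_pow[OF n0] phi_diff)
  have phif: "phi n k (f u) = g k (phi n k u - phi n k u0)" if "\<forall>m<n. summable (\<lambda>i. T i u m)" for k u
  proof -
    have "f u = (\<lambda>m. \<Sum>i. T i u m)" unfolding f_def T_def by simp
    then show ?thesis by (simp add: phi_suminf[OF that] phiT g_def)
  qed
  have smS: "\<forall>m<n. summable (\<lambda>i. T i u m)" if u: "u \<in> S" for u
  proof (intro allI impI)
    fix m assume m: "m < n"
    show "summable (\<lambda>i. T i u m)"
    proof (rule summable_comparison_test'[where N=0])
      show "summable (\<lambda>i. \<Sum>m<n. \<bar>T i u m\<bar>)" using sm u unfolding T_def by blast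
      fix i
      have "\<bar>T i u m\<bar> \<le> (\<Sum>m\<in>{..<n}. \<bar>T i u m\<bar>)" by (rule member_le_sum) (use m in auto)
      then show "norm (T i u m) \<le> (\<Sum>m<n. \<bar>T i u m\<bar>)" by simp
    qed
  qed
  have T0: "T (Suc i) u0 = (\<lambda>m. 0)" for i
  proof -
    have "(\<lambda>j. u0 j - u0 j) = (\<lambda>j. 0::real)" by simp
    then show ?thesis unfolding T_def by (simp add: pc_mult_zero)
  qed
  have sm0: "\<forall>m<n. summable (\<lambda>i. T i u0 m)"
    using summable_Suc_iff[of "\<lambda>i. T i u0 m" for m] T0 by simp
  have fu0: "phi n k (f u0) = phi n k (c 0)" for k
    using phif[OF sm0, of k] by (simp add: g_def)
  have ci: "((\<lambda>w. g k (w - phi n k u0) / (w - phi n k u0)) has_contour_integral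
      (2*pi*\<i> * winding_number (\<lambda>t. phi n k (\<lambda>j. gam j t)) (phi n k u0) * phi n k (c 0))) (\<lambda>t. phi n k (\<lambda>j. gam j t))"
    if k: "k < n" for k
  proof -
    define pk where "pk = (\<lambda>t. phi n k (\<lambda>j. gam j t))"
    define z0 where "z0 = phi n k u0"
    have valid: "valid_path pk" unfolding pk_def by (rule pk_valid[OF vp])
    then have pth: "path pk" by (rule valid_path_imp_path)
    have cl: "pathfinish pk = pathstart pk"
      unfolding pathfinish_def pathstart_def pk_def by (rule phi_cong) (use closed in auto)
    have diffeq: "phi n k (\<lambda>j. gam j t - u0 j) = pk t - z0" for t
      unfolding pk_def z0_def by (rule phi_diff)
    have nz: "pk t - z0 \<noteq> 0" if "t \<in> {0..1}" for t
      using phi_inv[OF n0, of "\<lambda>j. gam j t - u0 j" k] invertible that diffeq[of t] by auto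
    have cont: "continuous_on {0..1} (\<lambda>t. cmod (pk t - z0))"
      using pth unfolding path_def by (intro continuous_intros)
    obtain ts where ts: "ts \<in> {0..1}" "\<forall>t\<in>{0..1}. cmod (pk t - z0) \<le> cmod (pk ts - z0)"
      using continuous_attains_sup[OF compact_Icc _ cont] by auto
    define M where "M = cmod (pk ts - z0)"
    have M0: "M > 0" using nz[OF ts(1)] unfolding M_def by simp
    define us where "us = (\<lambda>j. gam j ts)"
    have usS: "us \<in> S" using gS ts(1) unfolding us_def by blast
    obtain e where e: "e > 0" "\<forall>w. (\<forall>m<n. \<bar>w m - us m\<bar> < e) \<longrightarrow> w \<in> S"
      using So usS unfolding pc_open_def by blast
    define B where "B = (\<Sum>m<n. \<bar>us m - u0 m\<bar>)"
    have B0: "B \<ge> 0" unfolding B_def by (intro sum_nonneg) auto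
    define \<epsilon> where "\<epsilon> = e / (B + 1)"
    have \<epsilon>0: "\<epsilon> > 0" using e B0 by (simp add: \<epsilon>_def)
    have \<epsilon>B: "\<epsilon> * B < e" using e B0 by (simp add: \<epsilon>_def field_simps)
    define w where "w = (\<lambda>m. u0 m + (1 + \<epsilon>) * (us m - u0 m))"
    have wS: "w \<in> S"
    proof -
      have "\<bar>w m - us m\<bar> < e" if m: "m < n" for m
      proof -
        have "\<bar>us m - u0 m\<bar> \<le> B" unfolding B_def by (rule member_le_sum) (use m in auto)
        then have "\<epsilon> * \<bar>us m - u0 m\<bar> \<le> \<epsilon> * B" using \<epsilon>0 by (intro mult_left_mono) auto
        moreover have "\<bar>w m - us m\<bar> = \<epsilon> * \<bar>us m - u0 m\<bar>"
        proof -
          have "w m - us m = \<epsilon> * (us m - u0 m)" by (simp add: w_def algebra_simps)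
          then show ?thesis using \<epsilon>0 by (simp add: abs_mult)
        qed
        ultimately show ?thesis using \<epsilon>B by linarith
      qed
      then show ?thesis using e(2) by blast
    qed
    have wu: "(\<lambda>j. w j - u0 j) = (\<lambda>j. (1 + \<epsilon>) * (us j - u0 j))" by (simp add: w_def)
    have phw: "phi n k w - phi n k u0 = of_real (1 + \<epsilon>) * (pk ts - z0)"
    proof -
      have "phi n k w - phi n k u0 = phi n k (\<lambda>j. w j - u0 j)" by (simp add: phi_diff)
      also have "\<dots> = of_real (1 + \<epsilon>) * (pk ts - z0)"
        unfolding wu phi_scale using diffeq[of ts] by (simp add: us_def)
      finally show ?thesis .
    qed
    define R where "R = (1 + \<epsilon>) * M"
    have RM: "R > M" using M0 \<epsilon>0 by (simp add: R_def algebra_simps)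
    have sw: "summable (\<lambda>i. \<Sum>m<n. \<bar>T i w m\<bar>)" using sm wS unfolding T_def by blast
    have snorm: "summable (\<lambda>i. norm (phi n k (c i)) * R^i)"
    proof (rule summable_comparison_test'[OF sw, where N=0])
      fix i
      have "norm (phi n k (T i w)) = norm (phi n k (c i)) * R^i"
      proof -
        have "cmod (complex_of_real (1+\<epsilon>)) = \<bar>1+\<epsilon>\<bar>" by (rule norm_of_real)
        then have n1: "cmod (1 + complex_of_real \<epsilon>) = 1 + \<epsilon>" using \<epsilon>0 by simp
        show ?thesis unfolding phiT phw using \<epsilon>0 by (simp add: norm_mult norm_power R_def M_def n1)
      qed
      moreover have "norm (phi n k (T i w)) \<le> (\<Sum>m<n. \<bar>T i w m\<bar>)" by (rule norm_phi_le)
      moreover have "norm (norm (phi n k (c i)) * R^i) = norm (phi n k (c i)) * R^i"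
        using RM M0 by simp
      ultimately show "norm (norm (phi n k (c i)) * R^i) \<le> (\<Sum>m<n. \<bar>T i w m\<bar>)" by simp
    qed
    have sK: "summable (\<lambda>i. phi n k (c i) * (complex_of_real R)^i)"
      by (rule summable_norm_cancel) (use snorm RM M0 in \<open>simp add: norm_mult norm_power\<close>)
    have hol: "(\<lambda>z. g k (z - z0)) holomorphic_on ball z0 R"
      unfolding holomorphic_on_def
    proof
      fix z assume z: "z \<in> ball z0 R"
      then have "norm (z - z0) < norm (complex_of_real R)" using RM M0 by (simp add: dist_norm norm_minus_commute)
      from termdiffs_strong[OF sK this]
      have d1: "DERIV (g k) (z - z0) :> (\<Sum>i. diffs (\<lambda>i. phi n k (c i)) i * (z - z0)^i)"
        unfolding g_def by simp
      have d2: "((\<lambda>z. z - z0) has_field_derivative 1) (at z)" by (auto intro!: derivative_eq_intros)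
      from DERIV_chain2[OF d1 d2] show "(\<lambda>z. g k (z - z0)) field_differentiable at z within ball z0 R"
        unfolding field_differentiable_def by (blast intro: has_field_derivative_at_within)
    qed
    have img: "path_image pk \<subseteq> ball z0 R - {z0}"
    proof
      fix x assume "x \<in> path_image pk"
      then obtain t where t: "t \<in> {0..1}" "x = pk t" by (auto simp: path_image_def)
      have "cmod (pk t - z0) \<le> M" using ts(2) t(1) unfolding M_def by blast
      then have "dist z0 x < R" using RM t by (simp add: dist_norm norm_minus_commute)
      moreover have "x \<noteq> z0" using nz[OF t(1)] t by simp
      ultimately show "x \<in> ball z0 R - {z0}" by simp
    qed
    have zero: "winding_number pk v = 0" if "v \<notin> ball z0 R" for v
      using winding_number_zero_outside[OF pth convex_ball cl that] img by blast
    have "((\<lambda>v. g k (v - z0) / (v - z0)) has_contour_integral (2*pi*\<i> * winding_number pk z0 * g k (z0 - z0))) pk"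
      using Cauchy_integral_formula_global[OF open_ball hol _ valid img cl zero] RM M0 by simp
    moreover have "g k (z0 - z0) = phi n k (c 0)" by (simp add: g_def)
    ultimately show ?thesis unfolding pk_def z0_def by simp
  qed
  have FG: "\<forall>k<n. \<forall>t\<in>{0..1}. phi n k (pc_mult n (f (\<lambda>j. gam j t)) (pc_inverse n (\<lambda>j. (\<lambda>j. gam j t) j - u0 j)))
      = (\<lambda>w. g k (w - phi n k u0) / (w - phi n k u0)) (phi n k (\<lambda>j. gam j t))"
  proof (intro allI impI ballI)
    fix k :: nat and t :: real assume k: "k < n" and t: "t \<in> {0..1}"
    have inv: "phi n k (pc_inverse n (\<lambda>j. gam j t - u0 j)) = 1 / (phi n k (\<lambda>j. gam j t) - phi n k u0)"
      using phi_inv[OF n0, of "\<lambda>j. gam j t - u0 j" k] invertible t by (intro inv_div) (simp add: phi_diff)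
    have "phi n k (f (\<lambda>j. gam j t)) = g k (phi n k (\<lambda>j. gam j t) - phi n k u0)"
      using phif smS gS t by blast
    then show "phi n k (pc_mult n (f (\<lambda>j. gam j t)) (pc_inverse n (\<lambda>j. (\<lambda>j. gam j t) j - u0 j)))
      = (\<lambda>w. g k (w - phi n k u0) / (w - phi n k u0)) (phi n k (\<lambda>j. gam j t))"
      using inv by (simp add: phi_hom[OF n0])
  qed
  have "\<forall>k<n. phi n k (pc_line_integral n (\<lambda>u. pc_mult n (f u) (pc_inverse n (\<lambda>j. u j - u0 j))) gam)
     = 2*pi*\<i> * winding_number (\<lambda>t. phi n k (\<lambda>j. gam j t)) (phi n k u0) * phi n k (c 0)"
    by (rule line_integral_phi[OF n0 vp, where G="\<lambda>k w. g k (w - phi n k u0) / (w - phi n k u0)"])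
       (use ci FG in auto)
  then show ?thesis using fu0 by (simp add: mult.commute)
qed

theorem mainTheorem17:
  fixes n :: nat and u0 :: "nat \<Rightarrow> real" and gam :: "nat \<Rightarrow> real \<Rightarrow> real"
  assumes n2: "n \<ge> 2"
    and piecewise_smooth: "\<forall>j<n. valid_path (gam j)"
    and closed: "\<forall>j<n. gam j 0 = gam j 1"
    and invertible: "\<forall>t\<in>{0..1}. pc_invertible n (\<lambda>j. gam j t - u0 j)"
    and simple: "\<forall>k\<in>{1..(n - 1) div 2}. simple_path (pc_proj_path n k gam)"
    and ccw: "\<forall>k\<in>{1..(n - 1) div 2}. \<forall>z\<in>inside (path_image (pc_proj_path n k gam)).
                 winding_number (pc_proj_path n k gam) z = 1"
    and avoid: "\<forall>k\<in>{1..(n - 1) div 2}. pc_proj_point n k u0 \<notin> path_image (pc_proj_path n k gam)"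
  shows
   "pc_line_integral n (\<lambda>u. pc_inverse n (\<lambda>j. u j - u0 j)) gam
      = (\<lambda>p. 2 * pi * (\<Sum>k\<in>{1..(n - 1) div 2}.
            pc_et n k p * (if pc_proj_point n k u0 \<in> inside (path_image (pc_proj_path n k gam)) then 1 else 0)))
    \<and>
    (\<forall>(c :: nat \<Rightarrow> nat \<Rightarrow> real) (S :: (nat \<Rightarrow> real) set) (\<sigma> :: nat \<Rightarrow> complex \<Rightarrow> real).
       pc_open n S
       \<and> (\<forall>t\<in>{0..1}. (\<lambda>j. gam j t) \<in> S)
       \<and> (\<forall>m<n. continuous_on (cball 0 1) (\<sigma> m))
       \<and> (\<forall>m<n. \<forall>t\<in>{0..1}. \<sigma> m (cis (2 * pi * t)) = gam m t)
       \<and> (\<forall>z\<in>cball 0 1. (\<lambda>m. \<sigma> m z) \<in> S)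
       \<and> (\<forall>u\<in>S. summable (\<lambda>i. \<Sum>m<n. \<bar>pc_mult n (c i) (pc_pow n (\<lambda>j. u j - u0 j) i) m\<bar>))
     \<longrightarrow>
       (let f = (\<lambda>u m. \<Sum>i. pc_mult n (c i) (pc_pow n (\<lambda>j. u j - u0 j) i) m) in
        pc_line_integral n (\<lambda>u. pc_mult n (f u) (pc_inverse n (\<lambda>j. u j - u0 j))) gam
        = pc_mult n (f u0) (\<lambda>p. 2 * pi * (\<Sum>k\<in>{1..(n - 1) div 2}.
            pc_et n k p * (if pc_proj_point n k u0 \<in> inside (path_image (pc_proj_path n k gam)) then 1 else 0)))))"
proof -
  have n0: "n > 0" using n2 by simp
  define P where "P k = (\<lambda>t. phi n k (\<lambda>j. gam j t))" for k
  define z0 where "z0 k = phi n k u0" for k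
  define ind where "ind k = (if pc_proj_point n k u0 \<in> inside (path_image (pc_proj_path n k gam)) then 1 else (0::real))" for k
  define I1 where "I1 = pc_line_integral n (\<lambda>u. pc_inverse n (\<lambda>j. u j - u0 j)) gam"
  define R1 where "R1 = (\<lambda>p. 2 * pi * (\<Sum>k\<in>{1..(n - 1) div 2}. pc_et n k p * ind k))"
  have valid: "valid_path (P k)" for k unfolding P_def by (rule pk_valid[OF piecewise_smooth])
  have pth: "path (P k)" for k using valid by (rule valid_path_imp_path)
  have cl: "pathfinish (P k) = pathstart (P k)" for k
    unfolding pathfinish_def pathstart_def P_def by (rule phi_cong) (use closed in auto)
  have diffeq: "phi n k (\<lambda>j. gam j t - u0 j) = P k t - z0 k" for k t
    unfolding P_def z0_def by (rule phi_diff)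
  have notin: "z0 k \<notin> path_image (P k)" for k
  proof
    assume "z0 k \<in> path_image (P k)"
    then obtain t where t: "t \<in> {0..1}" "z0 k = P k t" by (auto simp: path_image_def)
    have "phi n k (\<lambda>j. gam j t - u0 j) * phi n k (pc_inverse n (\<lambda>j. gam j t - u0 j)) = 1"
      using phi_inv[OF n0] invertible t by blast
    then show False using diffeq[of k t] t by simp
  qed
  have phiI1: "\<forall>k<n. phi n k I1 = 2*pi*\<i> * winding_number (P k) (z0 k)"
    unfolding I1_def
  proof (rule line_integral_phi[OF n0 piecewise_smooth, where G = "\<lambda>k w. 1/(w - z0 k)"])
    show "\<forall>k<n. ((\<lambda>w. 1/(w - z0 k)) has_contour_integral (2*pi*\<i> * winding_number (P k) (z0 k))) (\<lambda>t. phi n k (\<lambda>j. gam j t))"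
      using has_contour_integral_winding_number[OF valid notin] unfolding P_def by blast
    show "\<forall>k<n. \<forall>t\<in>{0..1}. phi n k (pc_inverse n (\<lambda>j. (\<lambda>j. gam j t) j - u0 j)) = 1 / (phi n k (\<lambda>j. gam j t) - z0 k)"
    proof (intro allI impI ballI)
      fix k :: nat and t :: real assume t: "t \<in> {0..1}"
      show "phi n k (pc_inverse n (\<lambda>j. (\<lambda>j. gam j t) j - u0 j)) = 1 / (phi n k (\<lambda>j. gam j t) - z0 k)"
        using phi_inv[OF n0, of "\<lambda>j. gam j t - u0 j" k] invertible t diffeq[of k t]
        by (intro inv_div) (simp add: P_def)
    qed
  qed
  have phiR1: "phi n k R1 = of_real (2*pi) * (\<Sum>k'\<in>{1..(n - 1) div 2}. of_real (ind k') * phi n k (pc_et n k'))" for k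
    unfolding R1_def by (simp only: phi_scale phi_sum phi_scale')
  have caseK: "phi n k I1 = phi n k R1" if k: "1 \<le> k" "2*k < n" for k
  proof -
    have kK: "k \<in> {1..(n - 1) div 2}" using k Kmem[of k n] by blast
    have "(\<Sum>k'\<in>{1..(n - 1) div 2}. of_real (ind k') * phi n k (pc_et n k'))
        = (\<Sum>k'\<in>{1..(n - 1) div 2}. if k' = k then of_real (ind k') * \<i> else 0)"
    proof (intro sum.cong refl)
      fix k' assume k': "k' \<in> {1..(n - 1) div 2}"
      then have k'': "1 \<le> k'" "2*k' < n" using Kmem[of k' n] by blast+
      then have "k \<noteq> n - k'" using k by auto
      then show "of_real (ind k') * phi n k (pc_et n k') = (if k' = k then of_real (ind k') * \<i> else 0)"
        using phi_et[OF n0 k'', of k] k by auto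
    qed
    also have "\<dots> = of_real (ind k) * \<i>" using kK by simp
    finally have r: "phi n k R1 = of_real (2*pi) * (of_real (ind k) * \<i>)" using phiR1 by simp
    have PP: "P k = pc_proj_path n k gam" unfolding P_def by (simp add: phi_proj_path fun_eq_iff)
    have ZZ: "z0 k = pc_proj_point n k u0" unfolding z0_def by (simp add: phi_proj_point)
    have w: "winding_number (P k) (z0 k) = of_real (ind k)"
    proof (cases "pc_proj_point n k u0 \<in> inside (path_image (pc_proj_path n k gam))")
      case True
      then show ?thesis using ccw kK unfolding PP ZZ ind_def by auto
    next
      case False
      then have "z0 k \<in> outside (path_image (P k))" using notin[of k] inside_Un_outside[of "path_image (P k)"]
        unfolding PP ZZ by blast
      then have "winding_number (P k) (z0 k) = 0" by (rule winding_number_zero_in_outside[OF pth cl])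
      then show ?thesis using False unfolding ind_def by simp
    qed
    show ?thesis using phiI1 k r w by simp
  qed
  have caseR: "phi n k I1 = phi n k R1" if k: "k < n" "k = 0 \<or> 2*k = n" for k
  proof -
    have "(\<Sum>k'\<in>{1..(n - 1) div 2}. of_real (ind k') * phi n k (pc_et n k')) = 0"
    proof (intro sum.neutral ballI)
      fix k' assume k': "k' \<in> {1..(n - 1) div 2}"
      then have k'': "1 \<le> k'" "2*k' < n" using Kmem[of k' n] by blast+
      then have "k \<noteq> n - k'" "k \<noteq> k'" using k by auto
      then show "of_real (ind k') * phi n k (pc_et n k') = 0"
        using phi_et[OF n0 k'', of k] k by auto
    qed
    then have r: "phi n k R1 = 0" using phiR1 by simp
    have "winding_number (P k) (z0 k) = 0"
    proof (rule wind_real_zero[OF pth cl _ _ notin])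
      show "\<forall>t\<in>{0..1}. Im (P k t) = 0" unfolding P_def using im_phi_real[OF n0 k(2)] by blast
      show "Im (z0 k) = 0" unfolding z0_def using im_phi_real[OF n0 k(2)] by blast
    qed
    then show ?thesis using phiI1 k r by simp
  qed
  have allk: "\<forall>k<n. phi n k I1 = phi n k R1"
  proof (intro allI impI)
    fix k assume k: "k < n"
    consider "k = 0 \<or> 2*k = n" | "1 \<le> k" "2*k < n" | "2*k > n" by linarith
    then show "phi n k I1 = phi n k R1"
    proof cases
      case 1 then show ?thesis using caseR k by blast
    next
      case 2 then show ?thesis using caseK by blast
    next
      case 3
      define k' where "k' = n - k"
      have k': "1 \<le> k'" "2*k' < n" "k' \<le> n" "k = n - k'" using 3 k by (auto simp: k'_def)
      have "phi n k I1 = cnj (phi n k' I1)" using phi_cnj[OF n0 k'(3)] k'(4) by simp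
      also have "\<dots> = cnj (phi n k' R1)" using caseK[OF k'(1,2)] by simp
      also have "\<dots> = phi n k R1" using phi_cnj[OF n0 k'(3)] k'(4) by simp
      finally show ?thesis .
    qed
  qed
  have I1z: "\<forall>m\<ge>n. I1 m = 0" unfolding I1_def pc_line_integral_def by simp
  have R1z: "\<forall>m\<ge>n. R1 m = 0" unfolding R1_def pc_et_def by simp
  have I1R1: "I1 = R1" by (rule eq_by_phi[OF n0 I1z R1z allk])
  have part1: "pc_line_integral n (\<lambda>u. pc_inverse n (\<lambda>j. u j - u0 j)) gam
      = (\<lambda>p. 2 * pi * (\<Sum>k\<in>{1..(n - 1) div 2}.
            pc_et n k p * (if pc_proj_point n k u0 \<in> inside (path_image (pc_proj_path n k gam)) then 1 else 0)))"
    using I1R1 unfolding I1_def R1_def ind_def by simp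
  show ?thesis
  proof (intro conjI part1 allI impI)
    fix c :: "nat \<Rightarrow> nat \<Rightarrow> real" and S :: "(nat \<Rightarrow> real) set" and \<sigma> :: "nat \<Rightarrow> complex \<Rightarrow> real"
    assume H: "pc_open n S
       \<and> (\<forall>t\<in>{0..1}. (\<lambda>j. gam j t) \<in> S)
       \<and> (\<forall>m<n. continuous_on (cball 0 1) (\<sigma> m))
       \<and> (\<forall>m<n. \<forall>t\<in>{0..1}. \<sigma> m (cis (2 * pi * t)) = gam m t)
       \<and> (\<forall>z\<in>cball 0 1. (\<lambda>m. \<sigma> m z) \<in> S)
       \<and> (\<forall>u\<in>S. summable (\<lambda>i. \<Sum>m<n. \<bar>pc_mult n (c i) (pc_pow n (\<lambda>j. u j - u0 j) i) m\<bar>))"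
    define f where "f = (\<lambda>u m. \<Sum>i. pc_mult n (c i) (pc_pow n (\<lambda>j. u j - u0 j) i) m)"
    define I2 where "I2 = pc_line_integral n (\<lambda>u. pc_mult n (f u) (pc_inverse n (\<lambda>j. u j - u0 j))) gam"
    have p2: "\<forall>k<n. phi n k I2 = phi n k (f u0) * (2*pi*\<i> * winding_number (P k) (z0 k))"
      using part2[OF n0 piecewise_smooth closed invertible, of S c f] H unfolding I2_def P_def z0_def f_def
      by blast
    have allk2: "\<forall>k<n. phi n k I2 = phi n k (pc_mult n (f u0) R1)"
      using p2 phiI1 allk by (simp add: phi_hom[OF n0])
    have I2z: "\<forall>m\<ge>n. I2 m = 0" unfolding I2_def pc_line_integral_def by simp
    have Mz: "\<forall>m\<ge>n. pc_mult n (f u0) R1 m = 0" unfolding pc_mult_def by simp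
    have "I2 = pc_mult n (f u0) R1" by (rule eq_by_phi[OF n0 I2z Mz allk2])
    then show "let f = (\<lambda>u m. \<Sum>i. pc_mult n (c i) (pc_pow n (\<lambda>j. u j - u0 j) i) m) in
        pc_line_integral n (\<lambda>u. pc_mult n (f u) (pc_inverse n (\<lambda>j. u j - u0 j))) gam
        = pc_mult n (f u0) (\<lambda>p. 2 * pi * (\<Sum>k\<in>{1..(n - 1) div 2}.
            pc_et n k p * (if pc_proj_point n k u0 \<in> inside (path_image (pc_proj_path n k gam)) then 1 else 0)))"
      unfolding Let_def I2_def f_def R1_def ind_def by simp
  qed
qed

end
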